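(* Let $\lambda=(\lambda_1,\lambda_2,\lambda_3)$ with $\lambda_1\ge\lambda_2\ge\lambda_3\ge1$ integers, and $A=\mathcal{L}(\lambda)$. (1) If $\lambda_1=\lambda_2=\lambda_3$: $\mathbb{SG}(A)=0$ if $\lambda_3\ge3$ is odd; $\mathbb{SG}(A)=1$ if $\lambda_3=1$ or $\lambda_3\ge4$ is even; $\mathbb{SG}(A)=2$ if $\lambda_3=2$. (2) If $\lambda_1>\lambda_2=\lambda_3$: $\mathbb{SG}(A)=0$ if $\lambda_3$ is odd, $1$ if $\lambda_3$ is even. (3) If $\lambda_1=\lambda_2>\lambda_3$: $\mathbb{SG}(A)=0$ if $\lambda_3$ is even, $1$ if $\lambda_3$ is odd. (4) If $\lambda_1>\lambda_2>\lambda_3=1$: $\mathbb{SG}(A)=1$ if $\lambda_2$ is even, $2$ if $\lambda_2$ is odd. (5) If $\lambda_1>\lambda_2>\lambda_3>1$: $\mathbb{SG}(A)=0$ if $\lambda_3$ is even, $1$ if $\lambda_3$ is odd.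
   Context: A partition is a finite non-increasing sequence of positive integers; $()$ is the empty partition. For non-negative $i,j$, $\lambda[i,j]$ is $(\lambda_{i+1}-j,\dots,\lambda_r-j)$ with all non-positive entries removed. LCTR: positions $\mathcal{L}(\lambda)$; if $\lambda\neq()$ the two moves go to $\mathcal{L}(\lambda[1,0])$ and $\mathcal{L}(\lambda[0,1])$; $\mathcal{L}(())$ is terminal. Normal play; $\mathbb{SG}(A)=\operatorname{mex}\{\mathbb{SG}(B):A\to B\}$. *)

theory Defs
  imports Main
begin

definition is_partition :: "nat list \<Rightarrow> bool" where
  "is_partition xs \<longleftrightarrow> sorted_wrt (\<ge>) xs \<and> (\<forall>x\<in>set xs. 0 < x)"

definition shift :: "nat list \<Rightarrow> nat \<Rightarrow> nat \<Rightarrow> nat list" where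
  "shift lam i j = map (\<lambda>x. x - j) (filter (\<lambda>x. j < x) (drop i lam))"

definition mex :: "nat set \<Rightarrow> nat" where
  "mex S = (LEAST n. n \<notin> S)"

text \<open>Sprague-Grundy value of L(lambda): the two moves go to lambda[1,0] and lambda[0,1]; L(()) is terminal.\<close>
function SG :: "nat list \<Rightarrow> nat" where
  "SG lam = (if lam = [] then 0 else mex {SG (shift lam 1 0), SG (shift lam 0 1)})"
  by pat_completeness auto
termination
proof (relation "measure (\<lambda>l. sum_list l + length l)")
  show "wf (measure (\<lambda>l. sum_list l + length l))" by simp
next
  fix lam :: "nat list"
  assume "lam \<noteq> []"
  then obtain a t where lam: "lam = a # t" by (cases lam) auto
  have "sum_list (filter (\<lambda>x. 0 < x) t) \<le> sum_list t"
    by (induction t) auto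
  moreover have "length (filter (\<lambda>x. 0 < x) t) \<le> length t" by simp
  ultimately show "(shift lam 1 0, lam) \<in> measure (\<lambda>l. sum_list l + length l)"
    using lam by (simp add: shift_def less_Suc_eq_le add_mono)
next
  fix lam :: "nat list"
  assume ne: "lam \<noteq> []"
  have key: "\<And>l::nat list. l \<noteq> [] \<Longrightarrow> sum_list (map (\<lambda>x. x - 1) (filter (\<lambda>x. 1 < x) l)) + length (filter (\<lambda>x. 1 < x) l) < sum_list l + length l"
  proof -
    fix l :: "nat list"
    have "sum_list (map (\<lambda>x. x - 1) (filter (\<lambda>x. 1 < x) l)) + length (filter (\<lambda>x. 1 < x) l) \<le> sum_list l"
      by (induction l) auto
    moreover assume "l \<noteq> []"
    ultimately show "sum_list (map (\<lambda>x. x - 1) (filter (\<lambda>x. 1 < x) l)) + length (filter (\<lambda>x. 1 < x) l) < sum_list l + length l"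
      by (metis add_strict_left_mono le_less_trans length_greater_0_conv add_0_right)
  qed
  show "(shift lam 0 1, lam) \<in> measure (\<lambda>l. sum_list l + length l)"
    using key[OF ne] by (simp add: shift_def)
qed

end

theory Submission
  imports Defs
begin

lemma SG_nil: "SG [] = 0"
  by (subst SG.simps) simp

lemma SG_cons: "SG (x#xs) = mex {SG (shift (x#xs) 1 0), SG (shift (x#xs) 0 1)}"
  by (subst SG.simps) simp

lemma mex2: "mex {x,y} = (if x \<noteq> 0 \<and> y \<noteq> 0 then 0 else if x \<noteq> 1 \<and> y \<noteq> 1 then 1 else 2)"
  unfolding mex_def
  by (rule Least_equality) (auto split: if_splits)

lemma mex1: "mex {x} = (if x \<noteq> 0 then 0 else 1)"
  using mex2[of x x] by simp

definition g1 :: "nat \<Rightarrow> nat" where "g1 a = (if odd a then 1 else 2)"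

definition g2 :: "nat \<Rightarrow> nat \<Rightarrow> nat" where
  "g2 a b = (if a = b then (if odd b then 2 else 0) else (if odd b then 0 else 1))"

definition g3 :: "nat \<Rightarrow> nat \<Rightarrow> nat \<Rightarrow> nat" where
  "g3 a b c = (if a = b \<and> b = c then (if c \<ge> 3 \<and> odd c then 0 else if c = 2 then 2 else 1)
     else if b = c then (if odd c then 0 else 1)
     else if a = b then (if even c then 0 else 1)
     else if c = 1 then (if even b then 1 else 2)
     else (if even c then 0 else 1))"

lemma SG1: "a \<ge> 1 \<Longrightarrow> SG [a] = g1 a"
proof (induction a)
  case 0 then show ?case by simp
next
  case (Suc n)
  show ?case
  proof (cases "n = 0")
    case True
    then show ?thesis by (simp add: SG_cons shift_def SG_nil mex1 mex2 g1_def)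
  next
    case False
    then have "SG [n] = g1 n" using Suc by simp
    then show ?thesis using False by (simp add: SG_cons shift_def SG_nil mex1 mex2 g1_def)
  qed
qed

lemma SG2: "b \<ge> 1 \<Longrightarrow> a \<ge> b \<Longrightarrow> SG [a,b] = g2 a b"
proof (induction b arbitrary: a)
  case 0 then show ?case by simp
next
  case (Suc m)
  show ?case
  proof (cases "m = 0")
    case True
    show ?thesis
    proof (cases "a = 1")
      case True
      with \<open>m=0\<close> show ?thesis by (simp add: SG_cons shift_def SG_nil mex1 mex2 g2_def)
    next
      case False
      then have "SG [a-1] = g1 (a-1)" using Suc by (intro SG1) simp
      with False \<open>m=0\<close> Suc.prems show ?thesis
        by (simp add: SG_cons shift_def SG_nil mex1 mex2 g2_def g1_def SG1)
    qed
  next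
    case False
    then have "SG [a-1,m] = g2 (a-1) m" using Suc by (intro Suc.IH) auto
    moreover have "SG [Suc m] = g1 (Suc m)" by (rule SG1) simp
    ultimately show ?thesis using False Suc.prems
      by (auto simp add: SG_cons shift_def mex1 mex2 g2_def g1_def)
  qed
qed

lemma ar_step: "m \<ge> 1 \<Longrightarrow> b \<ge> Suc m \<Longrightarrow> a \<ge> b \<Longrightarrow>
  mex {g2 b (Suc m), g3 (a-1) (b-1) m} = g3 a b (Suc m)"
  unfolding mex2 g2_def g3_def by (simp split: if_split) presburger

lemma ar_b: "b \<ge> 2 \<Longrightarrow> a \<ge> b \<Longrightarrow>
  mex {g2 b 1, g2 (a-1) (b-1)} = g3 a b 1"
  unfolding mex2 g2_def g3_def by (simp split: if_split) presburger

lemma ar_a: "a \<ge> 2 \<Longrightarrow> mex {g2 1 1, g1 (a-1)} = g3 a 1 1"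
  unfolding mex2 g2_def g1_def g3_def by (simp split: if_split)

lemma SG3: "c \<ge> 1 \<Longrightarrow> b \<ge> c \<Longrightarrow> a \<ge> b \<Longrightarrow> SG [a,b,c] = g3 a b c"
proof (induction c arbitrary: a b)
  case 0 then show ?case by simp
next
  case (Suc m)
  show ?case
  proof (cases "m = 0")
    case m0: True
    show ?thesis
    proof (cases "b = 1")
      case b1: True
      show ?thesis
      proof (cases "a = 1")
        case True
        have "SG [1,1] = g2 1 1" by (rule SG2) auto
        with True b1 m0 show ?thesis by (simp add: SG_cons shift_def SG_nil mex1 mex2 g2_def g3_def)
      next
        case False
        have "SG [1,1] = g2 1 1" by (rule SG2) auto
        moreover have "SG [a-1] = g1 (a-1)" using False Suc by (intro SG1) simp
        moreover have "shift [a,1,1] 1 0 = [1,1]" by (simp add: shift_def)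
        moreover have "shift [a,1,1] 0 1 = [a-1]" using False Suc.prems by (simp add: shift_def)
        ultimately show ?thesis using False b1 m0 Suc.prems ar_a[of a]
          by (simp add: SG_cons)
      qed
    next
      case False
      have "SG [b,1] = g2 b 1" by (rule SG2) (use Suc.prems in auto)
      moreover have "SG [a-1,b-1] = g2 (a-1) (b-1)" using False Suc.prems by (intro SG2) auto
      moreover have "shift [a,b,1] 1 0 = [b,1]" using Suc.prems by (simp add: shift_def)
      moreover have "shift [a,b,1] 0 1 = [a-1,b-1]" using False Suc.prems by (simp add: shift_def)
      ultimately show ?thesis using False m0 Suc.prems ar_b[of b a]
        by (simp add: SG_cons)
    qed
  next
    case False
    have "SG [a-1,b-1,m] = g3 (a-1) (b-1) m" using False Suc.prems by (intro Suc.IH) auto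
    moreover have "SG [b, Suc m] = g2 b (Suc m)" by (rule SG2) (use Suc.prems in auto)
    moreover have "shift [a,b,Suc m] 1 0 = [b,Suc m]" using Suc.prems by (simp add: shift_def)
    moreover have "shift [a,b,Suc m] 0 1 = [a-1,b-1,m]" using False Suc.prems by (simp add: shift_def)
    ultimately show ?thesis using False Suc.prems ar_step[of m b a]
      by (simp add: SG_cons)
  qed
qed

theorem mainTheorem9:
  fixes l1 l2 l3 :: nat
  assumes "l1 \<ge> l2" and "l2 \<ge> l3" and "l3 \<ge> 1"
  shows "(l1 = l2 \<and> l2 = l3 \<longrightarrow>
            ((l3 \<ge> 3 \<and> odd l3 \<longrightarrow> SG [l1, l2, l3] = 0) \<and>
             ((l3 = 1 \<or> (l3 \<ge> 4 \<and> even l3)) \<longrightarrow> SG [l1, l2, l3] = 1) \<and>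
             (l3 = 2 \<longrightarrow> SG [l1, l2, l3] = 2)))
       \<and> (l1 > l2 \<and> l2 = l3 \<longrightarrow>
            ((odd l3 \<longrightarrow> SG [l1, l2, l3] = 0) \<and> (even l3 \<longrightarrow> SG [l1, l2, l3] = 1)))
       \<and> (l1 = l2 \<and> l2 > l3 \<longrightarrow>
            ((even l3 \<longrightarrow> SG [l1, l2, l3] = 0) \<and> (odd l3 \<longrightarrow> SG [l1, l2, l3] = 1)))
       \<and> (l1 > l2 \<and> l2 > l3 \<and> l3 = 1 \<longrightarrow>
            ((even l2 \<longrightarrow> SG [l1, l2, l3] = 1) \<and> (odd l2 \<longrightarrow> SG [l1, l2, l3] = 2)))
       \<and> (l1 > l2 \<and> l2 > l3 \<and> l3 > 1 \<longrightarrow>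
            ((even l3 \<longrightarrow> SG [l1, l2, l3] = 0) \<and> (odd l3 \<longrightarrow> SG [l1, l2, l3] = 1)))"
  proof -
  have h: "SG [l1,l2,l3] = g3 l1 l2 l3" using SG3[OF assms(3,2,1)] .
  show ?thesis unfolding h g3_def
    by (intro conjI impI; elim conjE disjE; simp)
qed

end
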